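(* Let $m,n\ge1$ be integers, $A=(a_{ij})$ an $n\times m$ real matrix, $0<\delta<1$ real and $s>1$ an integer. Suppose there is an $m$-tuple of integers $s_1,\dots,s_m$ with $$s=\max_j|s_j|>2^{\frac{(m+n-1)n}{4m}}\left(\frac{n\delta^2}{m}\right)^{\frac{n}{2(m+n)}}\quad\text{and}\quad \max_i\|s_1a_{i1}+\dots+s_ma_{im}\|\le\delta s^{-\frac{m}{n}}.$$ Then applying the ILLL-algorithm to $A$ with $$q_{\max}\ge 2^{\frac{m^2+m(n-1)+4n}{4m}}\left(\frac{m}{n\delta^2}\right)^{\frac{n}{2(m+n)}}s$$ yields an $m$-tuple $q_1,\dots,q_m$ with $$\max_j|q_j|\le 2^{\frac{m^2+m(n-1)+4n}{4m}}\left(\frac{m}{n\delta^2}\right)^{\frac{n}{2(m+n)}}s\quad\text{and}\quad \max_i\|q_1a_{i1}+\dots+q_ma_{im}\|\le 2^{\frac{m+n}{2}}\sqrt n\,\delta s^{-\frac{m}{n}}.$$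
   Context: $\|x\|$ denotes the distance from $x\in\mathbb R$ to the nearest integer. A basis $b_1,\dots,b_r$ of $\mathbb R^r$ with Gram–Schmidt vectors $b_i^*=b_i-\sum_{j<i}\mu_{ij}b_j^*$, $\mu_{ij}=(b_i,b_j^* )/(b_j^*,b_j^* )$, is reduced if $|\mu_{ij}|\le\frac12$ ($j<i$) and $|b_i^*+\mu_{i,i-1}b_{i-1}^*|^2\ge\frac34|b_{i-1}^*|^2$ ($1<i\le r$); the LLL-algorithm returns a reduced basis of the lattice generated by its input basis. The ILLL-algorithm on input $A$ and $q_{\max}>1$: put $k'=\left\lceil -\frac{(m+n-1)(m+n)}{4n}+\frac{m\log_2 q_{\max}}{n}\right\rceil$ and, for $k\ge1$, $c(k)=\left(2^{-\frac{m+n+3}{4}-k+1}\right)^{\frac{m+n}{m}}$. Start with the basis given by the columns of $B=\begin{pmatrix} I_n & A\\ 0& c(1)I_m\end{pmatrix}$. In iteration $k=1,\dots,k'$: apply the LLL-algorithm to the current basis; from the first vector of the reduced basis, which has the form $(q_1a_{11}+\dots+q_ma_{1m}-p_1,\dots,q_1a_{n1}+\dots+q_ma_{nm}-p_n,c(k)q_1,\dots,c(k)q_m)^T$ with $p_i,q_j\in\mathbb Z$, output the $m$-tuple $q(k)=(q_1,\dots,q_m)$; then divide the last $m$ coordinates of all basis vectors by $2^{\frac{m+n}{m}}$. The $m$-tuples returned by the algorithm are $q(1),\dots,q(k')$. *)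

theory Defs
  imports Complex_Main
begin

(* Vectors of R^r are functions nat => real, only coordinates t < r matter.
   A family of r vectors (a basis) is nat => (nat => real), indices 0..r-1
   (the paper's b_1..b_r correspond to indices 0..r-1). *)

definition dist_int :: "real \<Rightarrow> real" where
  "dist_int x = (INF z::int. \<bar>x - real_of_int z\<bar>)"

definition ip :: "nat \<Rightarrow> (nat \<Rightarrow> real) \<Rightarrow> (nat \<Rightarrow> real) \<Rightarrow> real" where
  "ip r u v = (\<Sum>t<r. u t * v t)"

primrec gsl :: "nat \<Rightarrow> (nat \<Rightarrow> nat \<Rightarrow> real) \<Rightarrow> nat \<Rightarrow> (nat \<Rightarrow> real) list" where
  "gsl r b 0 = []"
| "gsl r b (Suc i) = gsl r b i @
     [(\<lambda>t. b i t - (\<Sum>j<i. (ip r (b i) (gsl r b i ! j) / ip r (gsl r b i ! j) (gsl r b i ! j))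
                            * (gsl r b i ! j) t))]"

definition gs :: "nat \<Rightarrow> (nat \<Rightarrow> nat \<Rightarrow> real) \<Rightarrow> nat \<Rightarrow> nat \<Rightarrow> real" where
  "gs r b i = gsl r b (Suc i) ! i"

definition gs_mu :: "nat \<Rightarrow> (nat \<Rightarrow> nat \<Rightarrow> real) \<Rightarrow> nat \<Rightarrow> nat \<Rightarrow> real" where
  "gs_mu r b i j = ip r (b i) (gs r b j) / ip r (gs r b j) (gs r b j)"

definition lattice_of :: "nat \<Rightarrow> (nat \<Rightarrow> nat \<Rightarrow> real) \<Rightarrow> (nat \<Rightarrow> real) set" where
  "lattice_of r b = {v. \<exists>z::nat \<Rightarrow> int. \<forall>t<r. v t = (\<Sum>i<r. real_of_int (z i) * b i t)}"

(* b_0..b_{r-1} is a basis of R^r (linearly independent, i.e. all b_i^* nonzero) *)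
definition is_basis :: "nat \<Rightarrow> (nat \<Rightarrow> nat \<Rightarrow> real) \<Rightarrow> bool" where
  "is_basis r b = (\<forall>i<r. \<exists>t<r. gs r b i t \<noteq> 0)"

definition reduced :: "nat \<Rightarrow> (nat \<Rightarrow> nat \<Rightarrow> real) \<Rightarrow> bool" where
  "reduced r b \<longleftrightarrow> is_basis r b \<and>
     (\<forall>i<r. \<forall>j<i. \<bar>gs_mu r b i j\<bar> \<le> 1/2) \<and>
     (\<forall>i. 0 < i \<and> i < r \<longrightarrow>
        ip r (\<lambda>t. gs r b i t + gs_mu r b i (i-1) * gs r b (i-1) t)
             (\<lambda>t. gs r b i t + gs_mu r b i (i-1) * gs r b (i-1) t)
        \<ge> 3/4 * ip r (gs r b (i-1)) (gs r b (i-1)))"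

definition ILLL_c :: "nat \<Rightarrow> nat \<Rightarrow> nat \<Rightarrow> real" where
  "ILLL_c m n k = (2 powr (- (real m + real n + 3) / 4 - real k + 1)) powr ((real m + real n) / real m)"

definition ILLL_kmax :: "nat \<Rightarrow> nat \<Rightarrow> real \<Rightarrow> int" where
  "ILLL_kmax m n qmax = \<lceil>- ((real m + real n - 1) * (real m + real n)) / (4 * real n)
                          + real m * log 2 qmax / real n\<rceil>"

(* initial basis: columns of [[I_n, A],[0, c(1) I_m]]; A i j for i<n, j<m *)
definition ILLL_init :: "nat \<Rightarrow> nat \<Rightarrow> (nat \<Rightarrow> nat \<Rightarrow> real) \<Rightarrow> nat \<Rightarrow> nat \<Rightarrow> real" where
  "ILLL_init m n A i t =
     (if i < n then (if t = i then 1 else 0)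
      else (if t < n then A t (i - n) else (if t - n = i - n then ILLL_c m n 1 else 0)))"

definition ILLL_scale :: "nat \<Rightarrow> nat \<Rightarrow> (nat \<Rightarrow> nat \<Rightarrow> real) \<Rightarrow> nat \<Rightarrow> nat \<Rightarrow> real" where
  "ILLL_scale m n b i t = (if t < n then b i t else b i t / 2 powr ((real m + real n) / real m))"

(* R is a run of the ILLL-algorithm on A, qmax: R k is the reduced basis returned by
   the LLL-algorithm in iteration k (1 <= k <= k'), any reduced basis of the lattice
   generated by the current basis. *)
definition ILLL_run :: "nat \<Rightarrow> nat \<Rightarrow> (nat \<Rightarrow> nat \<Rightarrow> real) \<Rightarrow> real \<Rightarrow> (nat \<Rightarrow> nat \<Rightarrow> nat \<Rightarrow> real) \<Rightarrow> bool" where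
  "ILLL_run m n A qmax R \<longleftrightarrow>
     (\<forall>k::nat. 1 \<le> k \<and> int k \<le> ILLL_kmax m n qmax \<longrightarrow>
        reduced (m + n) (R k) \<and>
        lattice_of (m + n) (R k) =
          lattice_of (m + n) (if k = 1 then ILLL_init m n A else ILLL_scale m n (R (k - 1))))"

definition ILLL_output :: "nat \<Rightarrow> nat \<Rightarrow> (nat \<Rightarrow> nat \<Rightarrow> real) \<Rightarrow> (nat \<Rightarrow> nat \<Rightarrow> nat \<Rightarrow> real)
     \<Rightarrow> nat \<Rightarrow> (nat \<Rightarrow> int) \<Rightarrow> bool" where
  "ILLL_output m n A R k q \<longleftrightarrow>
     (\<exists>p::nat \<Rightarrow> int.
        (\<forall>i<n. R k 0 i = (\<Sum>j<m. real_of_int (q j) * A i j) - real_of_int (p i)) \<and>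
        (\<forall>j<m. R k 0 (n + j) = ILLL_c m n k * real_of_int (q j)))"

end

theory Submission
  imports Defs "Jordan_Normal_Form.Determinant"
begin

lemma length_gsl[simp]: "length (gsl r b i) = i"
  by (induction i) auto

lemma gsl_nth: "i < j \<Longrightarrow> gsl r b j ! i = gs r b i"
proof (induction j)
  case 0 then show ?case by simp
next
  case (Suc j)
  show ?case
  proof (cases "i < j")
    case True
    then show ?thesis using Suc by (simp add: nth_append)
  next
    case False
    then have "i = j" using Suc by simp
    then show ?thesis by (simp add: gs_def)
  qed
qed

lemma gs_eq: "gs r b i t = b i t - (\<Sum>j<i. gs_mu r b i j * gs r b j t)"
proof -
  have "gs r b i t = b i t - (\<Sum>j<i. (ip r (b i) (gsl r b i ! j) / ip r (gsl r b i ! j) (gsl r b i ! j)) * (gsl r b i ! j) t)"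
    unfolding gs_def by (simp only: gsl.simps nth_append length_gsl) simp
  also have "\<dots> = b i t - (\<Sum>j<i. gs_mu r b i j * gs r b j t)"
    unfolding gs_mu_def by (intro arg_cong2[where f="(-)"] refl sum.cong) (simp_all add: gsl_nth)
  finally show ?thesis .
qed

lemma ip_sym: "ip r u v = ip r v u"
  unfolding ip_def by (simp add: mult.commute)

lemma ip_lin: "ip r (\<lambda>t. u t - (\<Sum>l\<in>L. a l * w l t)) v = ip r u v - (\<Sum>l\<in>L. a l * ip r (w l) v)"
  unfolding ip_def by (simp add: algebra_simps sum_subtractf sum_distrib_left sum_distrib_right sum.swap[of _ L])

lemma ip_self_zero: "ip r u u = 0 \<Longrightarrow> t < r \<Longrightarrow> u t = 0"
  unfolding ip_def
  by (metis (no_types, lifting) finite_lessThan lessThan_iff mult_eq_0_iff sum_nonneg_eq_0_iff zero_le_square)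

lemma ip_zero_left: "(\<And>t. t < r \<Longrightarrow> u t = 0) \<Longrightarrow> ip r u v = 0"
  unfolding ip_def by simp

lemma ip_nonneg: "ip r u u \<ge> 0"
  unfolding ip_def by (simp add: sum_nonneg)

lemma gs_orth: "j < i \<Longrightarrow> ip r (gs r b i) (gs r b j) = 0"
proof (induction i arbitrary: j rule: less_induct)
  case (less i)
  have e: "gs r b i = (\<lambda>t. b i t - (\<Sum>l<i. gs_mu r b i l * gs r b l t))"
    by (rule ext) (rule gs_eq)
  have "ip r (gs r b i) (gs r b j) = ip r (b i) (gs r b j) - (\<Sum>l<i. gs_mu r b i l * ip r (gs r b l) (gs r b j))"
    unfolding e by (rule ip_lin)
  also have "(\<Sum>l<i. gs_mu r b i l * ip r (gs r b l) (gs r b j)) = (\<Sum>l\<in>{j}. gs_mu r b i l * ip r (gs r b l) (gs r b j))"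
  proof (rule sum.mono_neutral_right)
    show "\<forall>l\<in>{..<i} - {j}. gs_mu r b i l * ip r (gs r b l) (gs r b j) = 0"
    proof
      fix l assume l: "l \<in> {..<i} - {j}"
      show "gs_mu r b i l * ip r (gs r b l) (gs r b j) = 0"
      proof (cases "l < j")
        case True
        then show ?thesis using less(1)[of j l] less(2) by (simp add: ip_sym)
      next
        case False
        then have "j < l" using l by auto
        then show ?thesis using less(1)[of l j] l by simp
      qed
    qed
  qed (use less in auto)
  also have "ip r (b i) (gs r b j) - (\<Sum>l\<in>{j}. gs_mu r b i l * ip r (gs r b l) (gs r b j)) = 0"
  proof (cases "ip r (gs r b j) (gs r b j) = 0")
    case True
    then have "ip r (b i) (gs r b j) = 0"
      by (subst ip_sym) (rule ip_zero_left, erule ip_self_zero[OF True])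
    then show ?thesis using True by (simp add: gs_mu_def)
  next
    case False
    then show ?thesis by (simp add: gs_mu_def)
  qed
  finally show ?case .
qed

lemma my_CS:
  fixes a :: "'a \<Rightarrow> 'b::linordered_field"
  shows "(\<Sum>i\<in>I. a i * b i)\<^sup>2 \<le> (\<Sum>i\<in>I. (a i)\<^sup>2) * (\<Sum>i\<in>I. (b i)\<^sup>2)"
proof (cases "(\<Sum>i\<in>I. (b i)\<^sup>2) > 0")
  case False
  then consider "\<And>i. i\<in>I \<Longrightarrow> b i = 0" | "infinite I"
    by (metis (mono_tags, lifting) sum_pos2 zero_le_power2 zero_less_power2)
  thus ?thesis
    by fastforce
next
  case True
  define r where "r \<equiv> (\<Sum>i\<in>I. a i * b i) / (\<Sum>i\<in>I. (b i)\<^sup>2)"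
  have "0 \<le> (\<Sum>i\<in>I. (a i - r * b i)\<^sup>2)"
    by (simp add: sum_nonneg)
  also have "... = (\<Sum>i\<in>I. (a i)\<^sup>2) - 2 * r * (\<Sum>i\<in>I. a i * b i) + r\<^sup>2 * (\<Sum>i\<in>I. (b i)\<^sup>2)"
    by (simp add: algebra_simps power2_eq_square sum_distrib_left flip: sum.distrib)
  also have "\<dots> = (\<Sum>i\<in>I. (a i)\<^sup>2) - ((\<Sum>i\<in>I. a i * b i))\<^sup>2 / (\<Sum>i\<in>I. (b i)\<^sup>2)"
    by (simp add: r_def power2_eq_square)
  finally have "0 \<le> (\<Sum>i\<in>I. (a i)\<^sup>2) - ((\<Sum>i\<in>I. a i * b i))\<^sup>2 / (\<Sum>i\<in>I. (b i)\<^sup>2)" .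
  hence "((\<Sum>i\<in>I. a i * b i))\<^sup>2 / (\<Sum>i\<in>I. (b i)\<^sup>2) \<le> (\<Sum>i\<in>I. (a i)\<^sup>2)"
    by (simp add: le_diff_eq)
  thus "((\<Sum>i\<in>I. a i * b i))\<^sup>2 \<le> (\<Sum>i\<in>I. (a i)\<^sup>2) * (\<Sum>i\<in>I. (b i)\<^sup>2)"
    by (simp add: pos_divide_le_eq True)
qed


lemma ip_lin_plus: "ip r (\<lambda>t. u t + (\<Sum>l\<in>L. a l * w l t)) v = ip r u v + (\<Sum>l\<in>L. a l * ip r (w l) v)"
  unfolding ip_def by (simp add: algebra_simps sum.distrib sum_distrib_left sum_distrib_right sum.swap[of _ L])

lemma b_eq: "b i t = gs r b i t + (\<Sum>j<i. gs_mu r b i j * gs r b j t)"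
  using gs_eq[of r b i t] by simp

lemma ip_b_gs: "ip r (b i) (gs r b k) = (if i < k then 0 else if i = k then ip r (gs r b k) (gs r b k) else ip r (b i) (gs r b k))"
proof -
  have e: "b i = (\<lambda>t. gs r b i t + (\<Sum>j<i. gs_mu r b i j * gs r b j t))"
    by (rule ext) (rule b_eq)
  have "ip r (b i) (gs r b k) = ip r (gs r b i) (gs r b k) + (\<Sum>j<i. gs_mu r b i j * ip r (gs r b j) (gs r b k))"
    by (subst e) (rule ip_lin_plus)
  moreover have "(\<Sum>j<i. gs_mu r b i j * ip r (gs r b j) (gs r b k)) = 0" if "i \<le> k"
  proof (intro sum.neutral ballI)
    fix j assume "j \<in> {..<i}"
    then have "j < k" using that by simp
    then have "ip r (gs r b j) (gs r b k) = 0" using gs_orth[of j k r b] ip_sym[of r "gs r b j" "gs r b k"] by simp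
    then show "gs_mu r b i j * ip r (gs r b j) (gs r b k) = 0" by simp
  qed
  moreover have "i < k \<Longrightarrow> ip r (gs r b i) (gs r b k) = 0"
    using gs_orth[of i k r b] ip_sym[of r "gs r b i" "gs r b k"] by simp
  ultimately show ?thesis by auto
qed

lemma gs_pos: "is_basis r b \<Longrightarrow> k < r \<Longrightarrow> ip r (gs r b k) (gs r b k) > 0"
  unfolding is_basis_def using ip_self_zero ip_nonneg
  by (metis order_le_less)

lemma lattice_lb:
  assumes B: "is_basis r b" and v: "\<forall>t<r. v t = (\<Sum>i<r. real_of_int (z i) * b i t)"
    and k: "k < r" and zk: "z k \<noteq> 0" and zi: "\<forall>i. k < i \<and> i < r \<longrightarrow> z i = 0"
  shows "ip r (gs r b k) (gs r b k) \<le> ip r v v"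
proof -
  let ?g = "ip r (gs r b k) (gs r b k)"
  have gp: "?g > 0" using gs_pos[OF B k] .
  have "ip r v (gs r b k) = (\<Sum>t<r. (\<Sum>i<r. real_of_int (z i) * b i t) * gs r b k t)"
    unfolding ip_def using v by (intro sum.cong) auto
  also have "\<dots> = (\<Sum>i<r. real_of_int (z i) * ip r (b i) (gs r b k))"
    unfolding ip_def sum_distrib_left sum_distrib_right
    by (subst sum.swap) (simp add: algebra_simps)
  also have "\<dots> = (\<Sum>i\<in>{k}. real_of_int (z i) * ip r (b i) (gs r b k))"
  proof (rule sum.mono_neutral_right)
    show "\<forall>i\<in>{..<r} - {k}. real_of_int (z i) * ip r (b i) (gs r b k) = 0"
    proof
      fix i assume i: "i \<in> {..<r} - {k}"
      show "real_of_int (z i) * ip r (b i) (gs r b k) = 0"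
      proof (cases "i < k")
        case True then show ?thesis by (subst ip_b_gs) simp
      next
        case False then show ?thesis using zi i by auto
      qed
    qed
  qed (use k in auto)
  also have "\<dots> = real_of_int (z k) * ?g" by (subst ip_b_gs) simp
  finally have e: "ip r v (gs r b k) = real_of_int (z k) * ?g" .
  have cs: "(ip r v (gs r b k))^2 \<le> ip r v v * ?g"
    unfolding ip_def using my_CS[of v "gs r b k" "{..<r}"] by (simp add: power2_eq_square)
  have "(real_of_int (z k))^2 * ?g * ?g \<le> ip r v v * ?g" using cs e by (simp add: power2_eq_square algebra_simps)
  then have "(real_of_int (z k))^2 * ?g \<le> ip r v v" using gp by simp
  moreover have z1: "(real_of_int (z k))^2 \<ge> 1"
  proof -
    have a: "1 \<le> \<bar>real_of_int (z k)\<bar>" using zk by (metis of_int_1_le_iff of_int_abs zero_less_abs_iff int_one_le_iff_zero_less)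
    have "(real_of_int (z k))^2 = \<bar>real_of_int (z k)\<bar>^2" by simp
    then show ?thesis using one_le_power[OF a, of 2] by simp
  qed
  moreover have "?g \<le> (real_of_int (z k))^2 * ?g" using mult_right_mono[OF z1, of ?g] gp by simp
  ultimately show ?thesis by linarith
qed

lemma reduced_step:
  assumes R: "reduced r b" and i: "0 < i" "i < r"
  shows "ip r (gs r b (i-1)) (gs r b (i-1)) \<le> 2 * ip r (gs r b i) (gs r b i)"
proof -
  let ?mu = "gs_mu r b i (i-1)"
  let ?g = "gs r b i" and ?h = "gs r b (i-1)"
  have c: "ip r (\<lambda>t. ?g t + ?mu * ?h t) (\<lambda>t. ?g t + ?mu * ?h t) \<ge> 3/4 * ip r ?h ?h"
    using R i unfolding reduced_def by blast
  have mu: "\<bar>?mu\<bar> \<le> 1/2" using R i unfolding reduced_def by auto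
  have o: "ip r ?g ?h = 0" using gs_orth[of "i-1" i r b] i by simp
  have "ip r (\<lambda>t. ?g t + ?mu * ?h t) (\<lambda>t. ?g t + ?mu * ?h t) = ip r ?g ?g + 2 * ?mu * ip r ?g ?h + ?mu^2 * ip r ?h ?h"
    unfolding ip_def by (simp add: algebra_simps sum.distrib sum_distrib_left power2_eq_square)
  also have "\<dots> = ip r ?g ?g + ?mu^2 * ip r ?h ?h" using o by simp
  finally have "3/4 * ip r ?h ?h \<le> ip r ?g ?g + ?mu^2 * ip r ?h ?h" using c by simp
  moreover have "?mu^2 \<le> 1/4"
  proof -
    have "?mu^2 = \<bar>?mu\<bar>^2" by simp
    also have "\<dots> \<le> (1/2)^2" by (rule power_mono[OF mu]) simp
    finally show ?thesis by (simp add: power2_eq_square)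
  qed
  moreover have "ip r ?h ?h \<ge> 0" by (rule ip_nonneg)
  moreover have "?mu^2 * ip r ?h ?h \<le> 1/4 * ip r ?h ?h" by (rule mult_right_mono) fact+
  ultimately show ?thesis by linarith
qed

lemma reduced_chain:
  assumes R: "reduced r b" and i: "i < r"
  shows "ip r (gs r b 0) (gs r b 0) \<le> 2^i * ip r (gs r b i) (gs r b i)"
  using i
proof (induction i)
  case 0 then show ?case by simp
next
  case (Suc i)
  have "ip r (gs r b i) (gs r b i) \<le> 2 * ip r (gs r b (Suc i)) (gs r b (Suc i))"
    using reduced_step[OF R, of "Suc i"] Suc.prems by simp
  then have "2^i * ip r (gs r b i) (gs r b i) \<le> 2^i * (2 * ip r (gs r b (Suc i)) (gs r b (Suc i)))"
    by (rule mult_left_mono) simp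
  moreover have "(2::real)^(Suc i) * ip r (gs r b (Suc i)) (gs r b (Suc i)) = 2^i * (2 * ip r (gs r b (Suc i)) (gs r b (Suc i)))"
    by simp
  ultimately show ?case using Suc by linarith
qed

lemma gs0: "gs r b 0 = b 0"
  by (rule ext) (use gs_eq[of r b 0] in simp)

lemma first_short:
  assumes R: "reduced r b" and v: "v \<in> lattice_of r b" and nz: "\<exists>t<r. v t \<noteq> 0"
  shows "ip r (b 0) (b 0) \<le> 2^(r-1) * ip r v v"
proof -
  have B: "is_basis r b" using R unfolding reduced_def by simp
  obtain z where z: "\<forall>t<r. v t = (\<Sum>i<r. real_of_int (z i) * b i t)" using v unfolding lattice_of_def by blast
  have ex: "\<exists>i<r. z i \<noteq> 0"
  proof (rule ccontr)
    assume "\<not> ?thesis"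
    then have "\<forall>t<r. v t = 0" using z by simp
    then show False using nz by blast
  qed
  then obtain i0 where i0: "i0 < r" "z i0 \<noteq> 0" by blast
  define k where "k = (GREATEST i. i < r \<and> z i \<noteq> 0)"
  have bnd: "\<forall>y. y < r \<and> z y \<noteq> 0 \<longrightarrow> y \<le> r" by simp
  have kk: "k < r \<and> z k \<noteq> 0"
    unfolding k_def by (rule GreatestI_nat[of "\<lambda>i. i < r \<and> z i \<noteq> 0" i0 r]) (use i0 in auto)
  have zi: "\<forall>i. k < i \<and> i < r \<longrightarrow> z i = 0"
  proof (intro allI impI)
    fix i assume a: "k < i \<and> i < r"
    show "z i = 0"
    proof (rule ccontr)
      assume "z i \<noteq> 0"
      then have "i \<le> k" unfolding k_def by (intro Greatest_le_nat[of _ i r]) (use a in auto)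
      then show False using a by simp
    qed
  qed
  have "ip r (gs r b k) (gs r b k) \<le> ip r v v" using lattice_lb[OF B z _ _ zi] kk by blast
  moreover have "ip r (b 0) (b 0) \<le> 2^k * ip r (gs r b k) (gs r b k)"
    using reduced_chain[OF R, of k] kk by (simp add: gs0)
  moreover have "(2::real)^k \<le> 2^(r-1)" using kk by (intro power_increasing) auto
  moreover have "ip r v v \<ge> 0" by (rule ip_nonneg)
  moreover have "ip r (gs r b k) (gs r b k) \<ge> 0" by (rule ip_nonneg)
  moreover have "2^k * ip r (gs r b k) (gs r b k) \<le> 2^k * ip r v v"
    by (rule mult_left_mono) (use calculation in auto)
  ultimately have "ip r (b 0) (b 0) \<le> 2^k * ip r v v" by linarith
  also have "\<dots> \<le> 2^(r-1) * ip r v v" by (rule mult_right_mono) fact+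
  finally show ?thesis .
qed


definition Bm :: "nat \<Rightarrow> (nat \<Rightarrow> nat \<Rightarrow> real) \<Rightarrow> real mat" where
  "Bm r b = mat r r (\<lambda>(t,i). b i t)"

lemma vec_sp[simp]: "vec r f \<bullet> vec r g = (\<Sum>i<r. f i * g i)"
  unfolding scalar_prod_def by (auto simp: atLeast0LessThan intro!: sum.cong)

lemma mat_mult_entry:
  "i < r \<Longrightarrow> j < r \<Longrightarrow> (mat r r f * mat r r g) $$ (i,j) = (\<Sum>k<r. f (i,k) * g (k,j))"
  by (simp add: vec_sp)

lemma det_gs: "(det (Bm r b))^2 = (\<Prod>i<r. ip r (gs r b i) (gs r b i))"
proof -
  define Gm where "Gm = mat r r (\<lambda>(t,i). gs r b i t)"
  define U where "U = mat r r (\<lambda>(j,i). if j = i then 1 else if j < i then gs_mu r b i j else 0)"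
  have BGU: "Bm r b = Gm * U"
  proof (rule eq_matI)
    fix t i assume t: "t < dim_row (Gm * U)" and i: "i < dim_col (Gm * U)"
    then have tr: "t < r" and ir: "i < r" by (simp_all add: Gm_def U_def)
    have "(Gm * U) $$ (t,i) = (\<Sum>j<r. gs r b j t * (if j = i then 1 else if j < i then gs_mu r b i j else 0))"
      unfolding Gm_def U_def by (simp add: mat_mult_entry tr ir)
    also have "\<dots> = (\<Sum>j<Suc i. gs r b j t * (if j = i then 1 else if j < i then gs_mu r b i j else 0))"
      by (rule sum.mono_neutral_right) (use ir in auto)
    also have "\<dots> = gs r b i t + (\<Sum>j<i. gs r b j t * (if j = i then 1 else if j < i then gs_mu r b i j else 0))"
      by simp
    also have "(\<Sum>j<i. gs r b j t * (if j = i then 1 else if j < i then gs_mu r b i j else 0)) = (\<Sum>j<i. gs_mu r b i j * gs r b j t)"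
      by (rule sum.cong) auto
    then have "gs r b i t + (\<Sum>j<i. gs r b j t * (if j = i then 1 else if j < i then gs_mu r b i j else 0)) = gs r b i t + (\<Sum>j<i. gs_mu r b i j * gs r b j t)"
      by simp
    also have "\<dots> = b i t" by (rule b_eq[symmetric])
    finally show "Bm r b $$ (t,i) = (Gm * U) $$ (t,i)" unfolding Bm_def using tr ir by simp
  qed (simp_all add: Bm_def Gm_def U_def)
  have Uc: "U \<in> carrier_mat r r" and Gc: "Gm \<in> carrier_mat r r" by (simp_all add: U_def Gm_def)
  have "det U = prod_list (diag_mat U)"
    by (rule det_upper_triangular[OF _ Uc]) (auto simp: upper_triangular_def U_def)
  also have "\<dots> = 1" unfolding prod_list_diag_prod by (simp add: U_def)
  finally have dU: "det U = 1" .
  have dB: "det (Bm r b) = det Gm" using det_mult[OF Gc Uc] BGU dU by simp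
  have GG: "transpose_mat Gm * Gm \<in> carrier_mat r r" using Gc by simp
  have ent: "(transpose_mat Gm * Gm) $$ (i,j) = ip r (gs r b i) (gs r b j)" if "i < r" "j < r" for i j
  proof -
    have "transpose_mat Gm = mat r r (\<lambda>(i,t). gs r b i t)"
      unfolding Gm_def by (rule eq_matI) auto
    then show ?thesis using that unfolding Gm_def ip_def by (simp add: mat_mult_entry)
  qed
  have "det (transpose_mat Gm * Gm) = prod_list (diag_mat (transpose_mat Gm * Gm))"
  proof (rule det_upper_triangular[OF _ GG])
    show "upper_triangular (transpose_mat Gm * Gm)"
      unfolding upper_triangular_def
    proof (intro allI impI)
      fix i j assume "i < dim_row (transpose_mat Gm * Gm)" "j < i"
      then have "i < r" "j < i" by (simp_all add: Gm_def)
      then show "(transpose_mat Gm * Gm) $$ (i,j) = 0" using ent[of i j] gs_orth[of j i r b] by simp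
    qed
  qed
  also have "\<dots> = (\<Prod>i<r. ip r (gs r b i) (gs r b i))"
    unfolding prod_list_diag_prod using ent by (simp add: Gm_def atLeast0LessThan)
  finally have "det (transpose_mat Gm * Gm) = (\<Prod>i<r. ip r (gs r b i) (gs r b i))" .
  moreover have "det (transpose_mat Gm * Gm) = det Gm * det Gm"
    using det_mult[of "transpose_mat Gm" r Gm] Gc det_transpose[OF Gc] by simp
  ultimately show ?thesis using dB by (simp add: power2_eq_square)
qed

lemma basis_det_nz: "is_basis r b \<Longrightarrow> det (Bm r b) \<noteq> 0"
proof -
  assume B: "is_basis r b"
  have "(\<Prod>i<r. ip r (gs r b i) (gs r b i)) > 0" by (rule prod_pos) (use gs_pos[OF B] in auto)
  then have "(det (Bm r b))^2 > 0" using det_gs[of r b] by simp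
  then show ?thesis by auto
qed

lemma Bm_comb:
  assumes "\<forall>i<r. \<forall>t<r. b' i t = (\<Sum>j<r. real_of_int (Z i j) * b j t)"
  shows "Bm r b' = Bm r b * map_mat real_of_int (mat r r (\<lambda>(j,i). Z i j))"
proof -
  have e: "map_mat real_of_int (mat r r (\<lambda>(j,i). Z i j)) = mat r r (\<lambda>(j,i). real_of_int (Z i j))"
    by (rule eq_matI) auto
  show ?thesis unfolding e Bm_def
    by (rule eq_matI) (auto simp: mat_mult_entry assms mult.commute)
qed

lemma lattice_basis_vec: "i < r \<Longrightarrow> b i \<in> lattice_of r b"
  unfolding lattice_of_def
proof (rule CollectI, rule exI[of _ "\<lambda>j. if j = i then 1 else 0"], intro allI impI)
  fix t assume "t < r" and i: "i < r"
  have "(\<Sum>j<r. real_of_int (if j = i then 1 else 0) * b j t) = (\<Sum>j<r. if j = i then b j t else 0)"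
    by (rule sum.cong) auto
  also have "\<dots> = b i t" using i by (simp add: sum.delta')
  finally show "b i t = (\<Sum>j<r. real_of_int (if j = i then 1 else 0) * b j t)" by simp
qed

lemma lattice_coeffs:
  assumes "lattice_of r b' \<subseteq> lattice_of r b"
  shows "\<exists>Z. \<forall>i<r. \<forall>t<r. b' i t = (\<Sum>j<r. real_of_int (Z i j) * b j t)"
proof -
  have "\<forall>i. \<exists>z. i < r \<longrightarrow> (\<forall>t<r. b' i t = (\<Sum>j<r. real_of_int (z j) * b j t))"
    using lattice_basis_vec[of _ r b'] assms unfolding lattice_of_def by blast
  then show ?thesis by metis
qed

lemma det_lattice:
  assumes L: "lattice_of r b = lattice_of r b'" and nz: "det (Bm r b) \<noteq> 0"
  shows "(det (Bm r b'))^2 = (det (Bm r b))^2"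
proof -
  obtain Z where Z: "\<forall>i<r. \<forall>t<r. b' i t = (\<Sum>j<r. real_of_int (Z i j) * b j t)"
    using lattice_coeffs[of r b' b] L by auto
  obtain W where W: "\<forall>i<r. \<forall>t<r. b i t = (\<Sum>j<r. real_of_int (W i j) * b' j t)"
    using lattice_coeffs[of r b b'] L by auto
  let ?Z = "mat r r (\<lambda>(j,i). Z i j)" and ?W = "mat r r (\<lambda>(j,i). W i j)"
  have 1: "Bm r b' = Bm r b * map_mat real_of_int ?Z" by (rule Bm_comb[OF Z])
  have 2: "Bm r b = Bm r b' * map_mat real_of_int ?W" by (rule Bm_comb[OF W])
  have c: "Bm r b \<in> carrier_mat r r" "Bm r b' \<in> carrier_mat r r"
    "map_mat real_of_int ?Z \<in> carrier_mat r r" "map_mat real_of_int ?W \<in> carrier_mat r r"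
    by (simp_all add: Bm_def)
  have d1: "det (Bm r b') = det (Bm r b) * real_of_int (det ?Z)"
    using det_mult[OF c(1) c(3)] 1 by simp
  have d2: "det (Bm r b) = det (Bm r b') * real_of_int (det ?W)"
    using det_mult[OF c(2) c(4)] 2 by simp
  have "det (Bm r b) * (real_of_int (det ?Z) * real_of_int (det ?W)) = det (Bm r b) * 1"
    using d1 d2 by (metis mult.assoc mult_1_right)
  then have "real_of_int (det ?Z) * real_of_int (det ?W) = 1" using mult_left_cancel[OF nz] by blast
  then have "real_of_int (det ?Z * det ?W) = 1" by simp
  then have "det ?Z * det ?W = 1" by (simp del: of_int_mult)
  then have "(det ?Z)^2 = 1" using zmult_eq_1_iff by (auto simp: power2_eq_square)
  then have "(real_of_int (det ?Z))^2 = 1" by (metis of_int_1 of_int_power)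
  then show ?thesis using d1 by (simp add: power_mult_distrib)
qed


lemma sum_split_nm: "(\<Sum>i<(n::nat)+m. f i) = (\<Sum>i<n. f i) + (\<Sum>j<m. f (n+j))"
  by (induction m) (simp_all add: add.assoc)

lemma prod_split_nm: "(\<Prod>i<(n::nat)+m. f i) = (\<Prod>i<n. f i) * (\<Prod>j<m. f (n+j))"
  by (induction m) (simp_all add: mult.assoc)

lemma det_scale: "det (Bm (m+n) (ILLL_scale m n b)) = det (Bm (m+n) b) / (2 powr ((real m + real n) / real m))^m"
proof -
  define la :: real where "la = 2 powr ((real m + real n) / real m)"
  define r where "r = m + n"
  define D where "D = mat r r (\<lambda>(t,u). if t = u then (if t < n then 1 else 1/la) else 0)"
  have Dc: "D \<in> carrier_mat r r" and Bc: "Bm r b \<in> carrier_mat r r" by (simp_all add: D_def Bm_def)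
  have e: "Bm r (ILLL_scale m n b) = D * Bm r b"
  proof (rule eq_matI)
    fix t i assume "t < dim_row (D * Bm r b)" "i < dim_col (D * Bm r b)"
    then have t: "t < r" and i: "i < r" by (simp_all add: D_def Bm_def)
    have "(D * Bm r b) $$ (t,i) = (\<Sum>u<r. (if t = u then (if t < n then 1 else 1/la) else 0) * b i u)"
      unfolding D_def Bm_def using t i by (simp add: mat_mult_entry)
    also have "\<dots> = (\<Sum>u<r. if t = u then (if t < n then 1 else 1/la) * b i u else 0)"
      by (rule sum.cong) auto
    also have "\<dots> = (if t < n then 1 else 1/la) * b i t" using t by (simp add: sum.delta)
    finally show "Bm r (ILLL_scale m n b) $$ (t,i) = (D * Bm r b) $$ (t,i)"
      unfolding Bm_def ILLL_scale_def la_def using t i by simp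
  qed (simp_all add: D_def Bm_def)
  have "det D = prod_list (diag_mat D)"
    by (rule det_upper_triangular[OF _ Dc]) (auto simp: upper_triangular_def D_def)
  also have "\<dots> = (\<Prod>i<n+m. if i < n then 1 else 1/la)"
    unfolding prod_list_diag_prod by (simp add: D_def r_def atLeast0LessThan add.commute)
  also have "\<dots> = (1/la)^m" by (simp add: prod_split_nm)
  finally have "det D = (1/la)^m" .
  then show ?thesis using det_mult[OF Dc Bc] e unfolding r_def la_def by (simp add: power_one_over)
qed

lemma det_init: "det (Bm (m+n) (ILLL_init m n A)) = (ILLL_c m n 1)^m"
proof -
  define r where "r = m + n"
  have Bc: "Bm r (ILLL_init m n A) \<in> carrier_mat r r" by (simp add: Bm_def)
  have "det (Bm r (ILLL_init m n A)) = prod_list (diag_mat (Bm r (ILLL_init m n A)))"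
    by (rule det_upper_triangular[OF _ Bc]) (auto simp: upper_triangular_def Bm_def ILLL_init_def)
  also have "\<dots> = (\<Prod>i<n+m. if i < n then 1 else ILLL_c m n 1)"
    unfolding prod_list_diag_prod Bm_def r_def atLeast0LessThan
    by (auto simp: ILLL_init_def add.commute intro!: prod.cong)
  also have "\<dots> = (ILLL_c m n 1)^m" by (simp add: prod_split_nm)
  finally show ?thesis unfolding r_def .
qed

definition Sset :: "nat \<Rightarrow> nat \<Rightarrow> (nat \<Rightarrow> nat \<Rightarrow> real) \<Rightarrow> real \<Rightarrow> (nat \<Rightarrow> real) set" where
  "Sset m n A c = {v. \<exists>q p::nat \<Rightarrow> int. \<forall>t<m+n. v t = (if t < n then (\<Sum>j<m. real_of_int (q j) * A t j) - real_of_int (p t) else c * real_of_int (q (t - n)))}"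

lemma init_sum:
  assumes t: "t < m + n"
  shows "(\<Sum>i<m+n. real_of_int (z i) * ILLL_init m n A i t) =
    (if t < n then real_of_int (z t) + (\<Sum>j<m. real_of_int (z (n+j)) * A t j) else real_of_int (z t) * ILLL_c m n 1)"
proof -
  have "(\<Sum>i<m+n. real_of_int (z i) * ILLL_init m n A i t) =
     (\<Sum>i<n. real_of_int (z i) * ILLL_init m n A i t) + (\<Sum>j<m. real_of_int (z (n+j)) * ILLL_init m n A (n+j) t)"
    using sum_split_nm[of "\<lambda>i. real_of_int (z i) * ILLL_init m n A i t" n m] by (simp add: add.commute)
  also have "\<dots> = (if t < n then real_of_int (z t) + (\<Sum>j<m. real_of_int (z (n+j)) * A t j) else real_of_int (z t) * ILLL_c m n 1)"
  proof (cases "t < n")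
    case True
    have "(\<Sum>i<n. real_of_int (z i) * ILLL_init m n A i t) = (\<Sum>i<n. if t = i then real_of_int (z i) else 0)"
      by (rule sum.cong) (auto simp: ILLL_init_def)
    also have "\<dots> = real_of_int (z t)" using True by (simp add: sum.delta)
    finally show ?thesis using True by (simp add: ILLL_init_def)
  next
    case False
    have "(\<Sum>i<n. real_of_int (z i) * ILLL_init m n A i t) = 0"
      by (rule sum.neutral) (use False in \<open>auto simp: ILLL_init_def\<close>)
    moreover have "(\<Sum>j<m. real_of_int (z (n+j)) * ILLL_init m n A (n+j) t) = (\<Sum>j<m. if t - n = j then real_of_int (z (n+j)) * ILLL_c m n 1 else 0)"
      by (rule sum.cong) (use False in \<open>auto simp: ILLL_init_def\<close>)
    moreover have "\<dots> = real_of_int (z t) * ILLL_c m n 1" using False t by (simp add: sum.delta)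
    ultimately show ?thesis using False by simp
  qed
  finally show ?thesis .
qed

lemma lattice_init: "lattice_of (m+n) (ILLL_init m n A) = Sset m n A (ILLL_c m n 1)"
proof
  show "lattice_of (m+n) (ILLL_init m n A) \<subseteq> Sset m n A (ILLL_c m n 1)"
  proof
    fix v assume "v \<in> lattice_of (m+n) (ILLL_init m n A)"
    then obtain z where z: "\<forall>t<m+n. v t = (\<Sum>i<m+n. real_of_int (z i) * ILLL_init m n A i t)"
      unfolding lattice_of_def by blast
    show "v \<in> Sset m n A (ILLL_c m n 1)" unfolding Sset_def
      by (rule CollectI, rule exI[of _ "\<lambda>j. z (n+j)"], rule exI[of _ "\<lambda>t. - z t"]) (auto simp: z init_sum mult.commute)
  qed
next
  show "Sset m n A (ILLL_c m n 1) \<subseteq> lattice_of (m+n) (ILLL_init m n A)"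
  proof
    fix v assume "v \<in> Sset m n A (ILLL_c m n 1)"
    then obtain q p where qp: "\<forall>t<m+n. v t = (if t < n then (\<Sum>j<m. real_of_int (q j) * A t j) - real_of_int (p t) else ILLL_c m n 1 * real_of_int (q (t - n)))"
      unfolding Sset_def by blast
    define z where "z = (\<lambda>i. if i < n then - p i else q (i - n))"
    show "v \<in> lattice_of (m+n) (ILLL_init m n A)" unfolding lattice_of_def
    proof (rule CollectI, rule exI[of _ z], intro allI impI)
      fix t assume t: "t < m + n"
      have "(\<Sum>i<m+n. real_of_int (z i) * ILLL_init m n A i t) = (if t < n then real_of_int (z t) + (\<Sum>j<m. real_of_int (z (n+j)) * A t j) else real_of_int (z t) * ILLL_c m n 1)"
        by (rule init_sum[OF t])
      then show "v t = (\<Sum>i<m+n. real_of_int (z i) * ILLL_init m n A i t)"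
        using qp t by (simp add: z_def mult.commute)
    qed
  qed
qed

lemma lattice_scale:
  assumes L: "lattice_of (m+n) b = Sset m n A c"
  shows "lattice_of (m+n) (ILLL_scale m n b) = Sset m n A (c / 2 powr ((real m + real n) / real m))"
proof -
  define la :: real where "la = 2 powr ((real m + real n) / real m)"
  have la0: "la \<noteq> 0" unfolding la_def by simp
  have sc: "(\<Sum>i<m+n. real_of_int (z i) * ILLL_scale m n b i t) =
      (if t < n then (\<Sum>i<m+n. real_of_int (z i) * b i t) else (\<Sum>i<m+n. real_of_int (z i) * b i t) / la)" for z t
  proof (cases "t < n")
    case True then show ?thesis unfolding ILLL_scale_def by simp
  next
    case False then show ?thesis unfolding ILLL_scale_def la_def by (simp add: sum_divide_distrib)
  qed
  show ?thesis unfolding la_def[symmetric]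
  proof
    show "lattice_of (m+n) (ILLL_scale m n b) \<subseteq> Sset m n A (c / la)"
    proof
      fix v assume "v \<in> lattice_of (m+n) (ILLL_scale m n b)"
      then obtain z where z: "\<forall>t<m+n. v t = (\<Sum>i<m+n. real_of_int (z i) * ILLL_scale m n b i t)"
        unfolding lattice_of_def by blast
      have "(\<lambda>t. \<Sum>i<m+n. real_of_int (z i) * b i t) \<in> lattice_of (m+n) b"
        unfolding lattice_of_def by blast
      then have "(\<lambda>t. \<Sum>i<m+n. real_of_int (z i) * b i t) \<in> Sset m n A c" using L by simp
      then obtain q p where qp: "\<forall>t<m+n. (\<Sum>i<m+n. real_of_int (z i) * b i t) = (if t < n then (\<Sum>j<m. real_of_int (q j) * A t j) - real_of_int (p t) else c * real_of_int (q (t - n)))"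
        unfolding Sset_def by blast
      show "v \<in> Sset m n A (c / la)" unfolding Sset_def
      proof (rule CollectI, rule exI[of _ q], rule exI[of _ p], intro allI impI)
        fix t assume t: "t < m + n"
        show "v t = (if t < n then (\<Sum>j<m. real_of_int (q j) * A t j) - real_of_int (p t) else c / la * real_of_int (q (t - n)))"
          using z[rule_format, OF t] sc[of z t] qp[rule_format, OF t] by (cases "t < n") simp_all
      qed
    qed
  next
    show "Sset m n A (c / la) \<subseteq> lattice_of (m+n) (ILLL_scale m n b)"
    proof
      fix v assume "v \<in> Sset m n A (c / la)"
      then obtain q p where qp: "\<forall>t<m+n. v t = (if t < n then (\<Sum>j<m. real_of_int (q j) * A t j) - real_of_int (p t) else c / la * real_of_int (q (t - n)))"
        unfolding Sset_def by blast
      define w where "w = (\<lambda>t. if t < n then (\<Sum>j<m. real_of_int (q j) * A t j) - real_of_int (p t) else c * real_of_int (q (t - n)))"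
      have "w \<in> Sset m n A c" unfolding Sset_def w_def by blast
      then have "w \<in> lattice_of (m+n) b" using L by simp
      then obtain z where z: "\<forall>t<m+n. w t = (\<Sum>i<m+n. real_of_int (z i) * b i t)"
        unfolding lattice_of_def by blast
      show "v \<in> lattice_of (m+n) (ILLL_scale m n b)" unfolding lattice_of_def
      proof (rule CollectI, rule exI[of _ z], intro allI impI)
        fix t assume t: "t < m+n"
        show "v t = (\<Sum>i<m+n. real_of_int (z i) * ILLL_scale m n b i t)"
          unfolding sc using z[rule_format, OF t] qp[rule_format, OF t] la0 by (cases "t < n") (simp_all add: w_def)
      qed
    qed
  qed
qed


lemma dist_int_le: "dist_int x \<le> \<bar>x - real_of_int z\<bar>"
  unfolding dist_int_def by (rule cINF_lower) (auto intro: bdd_belowI[of _ 0])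

lemma round_min: "\<bar>x - real_of_int (round x)\<bar> \<le> \<bar>x - real_of_int z\<bar>"
proof -
  have a: "real_of_int (round x) > x - 1/2" "real_of_int (round x) \<le> x + 1/2"
    by (rule of_int_round_gt, rule of_int_round_le)
  consider "z \<le> round x - 1" | "z = round x" | "z \<ge> round x + 1" by linarith
  then show ?thesis
  proof cases
    case 1 then have "real_of_int z \<le> real_of_int (round x) - 1" by linarith
    then show ?thesis using a by linarith
  next
    case 2 then show ?thesis by simp
  next
    case 3 then have "real_of_int z \<ge> real_of_int (round x) + 1" by linarith
    then show ?thesis using a by linarith
  qed
qed

lemma dist_int_round: "dist_int x = \<bar>x - real_of_int (round x)\<bar>"
proof (rule antisym)
  show "dist_int x \<le> \<bar>x - real_of_int (round x)\<bar>" by (rule dist_int_le)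
  show "\<bar>x - real_of_int (round x)\<bar> \<le> dist_int x"
    unfolding dist_int_def by (rule cINF_greatest) (auto intro: round_min)
qed

lemma gauss2: "2 * real (\<Sum>i<r. i) = real r * (real r - 1)"
  by (induction r) (simp_all add: algebra_simps)

lemma first_det:
  assumes R: "reduced r b"
  shows "(ip r (b 0) (b 0))^r \<le> 2^(\<Sum>i<r. i) * (det (Bm r b))^2"
proof -
  have "(ip r (b 0) (b 0))^r = (\<Prod>i<r. ip r (gs r b 0) (gs r b 0))" by (simp add: gs0)
  also have "\<dots> \<le> (\<Prod>i<r. 2^i * ip r (gs r b i) (gs r b i))"
    by (rule prod_mono) (auto simp: ip_nonneg reduced_chain[OF R])
  also have "\<dots> = 2^(\<Sum>i<r. i) * (\<Prod>i<r. ip r (gs r b i) (gs r b i))"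
    by (simp add: prod.distrib power_sum)
  also have "\<dots> = 2^(\<Sum>i<r. i) * (det (Bm r b))^2" by (simp add: det_gs)
  finally show ?thesis .
qed

lemma c_pos: "ILLL_c m n k > 0"
  unfolding ILLL_c_def by simp

lemma c_exp: "ILLL_c m n k = 2 powr ((- (real m + real n + 3) / 4 - real k + 1) * ((real m + real n) / real m))"
  unfolding ILLL_c_def by (simp add: powr_powr)

lemma c_Suc: "ILLL_c m n (Suc k) = ILLL_c m n k / 2 powr ((real m + real n) / real m)"
proof -
  have "(- (real m + real n + 3) / 4 - real (Suc k) + 1) * ((real m + real n) / real m)
      = (- (real m + real n + 3) / 4 - real k + 1) * ((real m + real n) / real m) - (real m + real n) / real m"
    by (simp add: algebra_simps)
  then show ?thesis unfolding c_exp by (simp add: powr_diff)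
qed

lemma run_facts:
  assumes run: "ILLL_run m n A qmax R"
  shows "1 \<le> k \<Longrightarrow> int k \<le> ILLL_kmax m n qmax \<Longrightarrow>
    lattice_of (m+n) (R k) = Sset m n A (ILLL_c m n k) \<and> (det (Bm (m+n) (R k)))^2 = ((ILLL_c m n k)^m)^2"
proof (induction k)
  case 0 then show ?case by simp
next
  case (Suc k)
  have Rk: "reduced (m+n) (R (Suc k))" and Lk: "lattice_of (m + n) (R (Suc k)) =
          lattice_of (m + n) (if Suc k = 1 then ILLL_init m n A else ILLL_scale m n (R (Suc k - 1)))"
    using run Suc.prems unfolding ILLL_run_def by blast+
  have nz: "det (Bm (m+n) (R (Suc k))) \<noteq> 0"
    using Rk basis_det_nz unfolding reduced_def by blast
  show ?case
  proof (cases "k = 0")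
    case True
    then have L: "lattice_of (m + n) (R (Suc k)) = lattice_of (m + n) (ILLL_init m n A)" using Lk by simp
    have "(det (Bm (m+n) (ILLL_init m n A)))^2 = (det (Bm (m+n) (R (Suc k))))^2"
      by (rule det_lattice[OF L nz])
    then show ?thesis using L True by (simp add: lattice_init det_init)
  next
    case False
    then have IH: "lattice_of (m+n) (R k) = Sset m n A (ILLL_c m n k) \<and> (det (Bm (m+n) (R k)))^2 = ((ILLL_c m n k)^m)^2"
      using Suc by simp
    have L: "lattice_of (m + n) (R (Suc k)) = lattice_of (m + n) (ILLL_scale m n (R k))" using Lk False by simp
    have "(det (Bm (m+n) (ILLL_scale m n (R k))))^2 = (det (Bm (m+n) (R (Suc k))))^2"
      by (rule det_lattice[OF L nz])
    moreover have "(det (Bm (m+n) (ILLL_scale m n (R k))))^2 = ((ILLL_c m n (Suc k))^m)^2"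
      unfolding det_scale c_Suc using IH by (simp add: power_divide)
    moreover have "lattice_of (m + n) (R (Suc k)) = Sset m n A (ILLL_c m n (Suc k))"
      unfolding L c_Suc by (rule lattice_scale) (use IH in simp)
    ultimately show ?thesis by simp
  qed
qed


lemma coord_le_ip: "t < r \<Longrightarrow> (u t)^2 \<le> ip r u u"
  unfolding ip_def power2_eq_square by (rule member_le_sum) auto



theorem lemma4:
  fixes m n :: nat and A :: "nat \<Rightarrow> nat \<Rightarrow> real" and \<delta> :: real and s :: int
    and sv :: "nat \<Rightarrow> int" and qmax :: real and R :: "nat \<Rightarrow> nat \<Rightarrow> nat \<Rightarrow> real"
  assumes "m \<ge> 1" and "n \<ge> 1"
    and "0 < \<delta>" and "\<delta> < 1"
    and "s > 1"
    and "s = Max ((\<lambda>j. \<bar>sv j\<bar>) ` {..<m})"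
    and "real_of_int s > 2 powr ((real m + real n - 1) * real n / (4 * real m))
                          * (real n * \<delta>^2 / real m) powr (real n / (2 * (real m + real n)))"
    and "\<forall>i<n. dist_int (\<Sum>j<m. real_of_int (sv j) * A i j)
                \<le> \<delta> * real_of_int s powr (- real m / real n)"
    and "qmax \<ge> 2 powr ((real m ^ 2 + real m * (real n - 1) + 4 * real n) / (4 * real m))
                 * (real m / (real n * \<delta>^2)) powr (real n / (2 * (real m + real n))) * real_of_int s"
    and "ILLL_run m n A qmax R"
  shows "\<exists>k::nat. 1 \<le> k \<and> int k \<le> ILLL_kmax m n qmax \<and>
           (\<exists>q. ILLL_output m n A R k q \<and>
              (\<forall>j<m. real_of_int \<bar>q j\<bar> \<le>
                 2 powr ((real m ^ 2 + real m * (real n - 1) + 4 * real n) / (4 * real m))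
                 * (real m / (real n * \<delta>^2)) powr (real n / (2 * (real m + real n))) * real_of_int s) \<and>
              (\<forall>i<n. dist_int (\<Sum>j<m. real_of_int (q j) * A i j)
                 \<le> 2 powr ((real m + real n) / 2) * sqrt (real n) * \<delta> * real_of_int s powr (- real m / real n)))"
proof -
  have m1: "m \<ge> 1" and n1: "n \<ge> 1" and d0: "0 < \<delta>" and d1: "\<delta> < 1" and s1: "s > 1"
    and sMax: "s = Max ((\<lambda>j. \<bar>sv j\<bar>) ` {..<m})"
    and H7: "real_of_int s > 2 powr ((real m + real n - 1) * real n / (4 * real m))
                          * (real n * \<delta>^2 / real m) powr (real n / (2 * (real m + real n)))"
    and Hd: "\<forall>i<n. dist_int (\<Sum>j<m. real_of_int (sv j) * A i j)
                \<le> \<delta> * real_of_int s powr (- real m / real n)"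
    and HQ: "qmax \<ge> 2 powr ((real m ^ 2 + real m * (real n - 1) + 4 * real n) / (4 * real m))
                 * (real m / (real n * \<delta>^2)) powr (real n / (2 * (real m + real n))) * real_of_int s"
    and run: "ILLL_run m n A qmax R"
    using assms by blast+
  define M where "M = real m"
  define N where "N = real n"
  define rr where "rr = real m + real n"
  define S where "S = real_of_int s"
  have M0: "M > 0" and N0: "N > 0" and rr0: "rr > 0" and S1: "S > 1"
    using m1 n1 s1 by (simp_all add: M_def N_def rr_def S_def)
  have rrMN: "rr = M + N" by (simp add: rr_def M_def N_def)
  define LSS where "LSS = log 2 S"
  define LDD where "LDD = log 2 \<delta>"
  define LNN where "LNN = log 2 N"
  define LMM where "LMM = log 2 M"
  define G where "G = (LNN - LMM) / 2 + LDD"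
  define w where "w = G / rr"
  define y where "y = M * w"
  have Gw: "G = rr * w" unfolding w_def using rr0 by simp
  define z where "z = M / N * LSS"
  define \<beta> where "\<beta> = 1 - (rr + 3) / 4 - y + z"
  define P where "P = 2 powr ((real m + real n - 1) * real n / (4 * real m))
                          * (real n * \<delta>^2 / real m) powr (real n / (2 * (real m + real n)))"
  define Q where "Q = 2 powr ((real m ^ 2 + real m * (real n - 1) + 4 * real n) / (4 * real m))
                 * (real m / (real n * \<delta>^2)) powr (real n / (2 * (real m + real n))) * real_of_int s"
  have d2: "log 2 (\<delta>^2) = 2 * LDD" unfolding LDD_def using d0 by (simp add: log_nat_power)
  have P0: "P > 0" unfolding P_def using d0 m1 n1 by simp
  have logP: "log 2 P = (rr - 1) * N / (4 * M) + N / (2 * rr) * (LNN + 2 * LDD - LMM)"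
  proof -
    have "log 2 (real n * \<delta>^2 / real m) = LNN + 2 * LDD - LMM"
      unfolding LNN_def LMM_def N_def M_def using d0 m1 n1 d2 by (simp add: log_divide log_mult)
    then show ?thesis unfolding P_def using d0 m1 n1
      by (simp add: log_mult log_powr rr_def M_def N_def)
  qed
  have "LSS > log 2 P" unfolding LSS_def S_def using H7 P0 unfolding P_def[symmetric] by (simp add: log_less)
  then have F1a: "(M / N) * (LSS - log 2 P) > 0" using M0 N0 by simp
  have "N / (2 * rr) * (LNN + 2 * LDD - LMM) = N * w" unfolding w_def G_def using rr0 by (simp add: field_simps)
  then have logP': "log 2 P = (rr - 1) * N / (4 * M) + N * w" unfolding logP by simp
  have "(M / N) * (LSS - log 2 P) = z - y - (rr - 1) / 4"
    unfolding logP' z_def y_def rrMN using M0 N0 by (simp add: field_simps)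
  then have F1: "z - y > (rr - 1) / 4" using F1a by simp
  have b0: "\<beta> > 0" unfolding \<beta>_def using F1 by (simp add: field_simps)
  define k where "k = nat \<lceil>\<beta>\<rceil>"
  have kb: "real k \<ge> \<beta>" "real k < \<beta> + 1" "k \<ge> 1"
    unfolding k_def using b0 by (simp_all, linarith, linarith)
  define e where "e = (- (rr + 3) / 4 - real k + 1) * (rr / M)"
  have MN0: "M + N > 0" using M0 N0 by simp
  define \<gamma> where "\<gamma> = G - LSS - z"
  have Q0: "Q > 0" unfolding Q_def using d0 m1 n1 s1 by simp
  have logQ: "log 2 Q = (rr - 1) / 4 + N / M + N / (2 * rr) * (LMM - LNN - 2 * LDD) + LSS"
  proof -
    have a: "log 2 (real m / (real n * \<delta>^2)) = LMM - LNN - 2 * LDD"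
      unfolding LNN_def LMM_def N_def M_def using d0 m1 n1 d2 by (simp add: log_divide log_mult)
    have b: "(real m ^ 2 + real m * (real n - 1) + 4 * real n) / (4 * real m) = (rr - 1) / 4 + N / M"
      unfolding rr_def N_def M_def using m1 by (simp add: field_simps power2_eq_square)
    show ?thesis unfolding Q_def using d0 m1 n1 s1 a b
      by (simp add: log_mult log_powr rr_def M_def N_def LSS_def S_def)
  qed
  have "N / (2 * rr) * (LMM - LNN - 2 * LDD) = - N * w" unfolding w_def G_def using rr0 by (simp add: field_simps)
  then have logQ': "log 2 Q = (rr - 1) / 4 + N / M - N * w + LSS" unfolding logQ by simp
  have IA: "log 2 Q + real k + e = (N / M) * (\<beta> + 1 - real k)"
    unfolding logQ' e_def \<beta>_def y_def z_def rrMN using M0 N0 MN0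
    by (simp add: field_simps)
  have IB: "\<gamma> - e = (rr / M) * (real k - \<beta>)"
    unfolding \<gamma>_def e_def \<beta>_def y_def z_def Gw rrMN using M0 N0 MN0
    by (simp add: field_simps)
  have IC: "- ((rr - 1) * rr) / (4 * N) + M * log 2 Q / N = \<beta> + 1"
    unfolding logQ' \<beta>_def y_def z_def rrMN using M0 N0 MN0
    by (simp add: field_simps)
  have eA: "- real k - e \<le> log 2 Q"
  proof -
    have "(N / M) * (\<beta> + 1 - real k) \<ge> 0" using kb M0 N0 by simp
    then show ?thesis using IA by linarith
  qed
  have eB: "e \<le> \<gamma>"
  proof -
    have "(rr / M) * (real k - \<beta>) \<ge> 0" using kb M0 rr0 by simp
    then show ?thesis using IB by linarith
  qed
  have kmax: "int k \<le> ILLL_kmax m n qmax"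
  proof -
    have "log 2 Q \<le> log 2 qmax" using HQ Q0 unfolding Q_def[symmetric] by (simp add: log_mono)
    then have "M * log 2 Q / N \<le> M * log 2 qmax / N" using M0 N0 by (simp add: divide_right_mono)
    then have "real k \<le> - ((rr - 1) * rr) / (4 * N) + M * log 2 qmax / N" using IC kb by linarith
    also have "\<dots> = - ((real m + real n - 1) * (real m + real n)) / (4 * real n) + real m * log 2 qmax / real n"
      by (simp add: rr_def M_def N_def)
    also have "\<dots> \<le> of_int (ILLL_kmax m n qmax)" unfolding ILLL_kmax_def by (rule le_of_int_ceiling)
    finally show ?thesis by simp
  qed
  define c where "c = ILLL_c m n k"
  have ce: "c = 2 powr e" unfolding c_def c_exp e_def rr_def M_def by simp
  have c0: "c > 0" unfolding c_def by (rule c_pos)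
  have RF: "lattice_of (m+n) (R k) = Sset m n A c \<and> (det (Bm (m+n) (R k)))^2 = (c^m)^2"
    unfolding c_def by (rule run_facts[OF run]) (use kb kmax in auto)
  have Rk: "reduced (m+n) (R k)" using run kb kmax unfolding ILLL_run_def by blast
  define \<epsilon> where "\<epsilon> = \<delta> * S powr (- M / N)"
  have eps0: "\<epsilon> > 0" unfolding \<epsilon>_def using d0 S1 by simp
  define x where "x = (\<lambda>t. \<Sum>j<m. real_of_int (sv j) * A t j)"
  define v where "v = (\<lambda>t. if t < n then x t - real_of_int (round (x t)) else c * real_of_int (sv (t - n)))"
  have vS: "v \<in> Sset m n A c" unfolding Sset_def
    by (rule CollectI, rule exI[of _ sv], rule exI[of _ "\<lambda>t. round (x t)"]) (simp add: v_def x_def)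
  have vL: "v \<in> lattice_of (m+n) (R k)" using vS RF by simp
  have fin: "finite ((\<lambda>j. \<bar>sv j\<bar>) ` {..<m})" and ne: "(\<lambda>j. \<bar>sv j\<bar>) ` {..<m} \<noteq> {}" using m1 by (auto simp: lessThan_empty_iff)
  have svle: "\<bar>sv j\<bar> \<le> s" if "j < m" for j unfolding sMax using fin that by simp
  obtain j0 where j0: "j0 < m" "\<bar>sv j0\<bar> = s" using Max_in[OF fin ne] sMax by auto
  have vnz: "\<exists>t<m+n. v t \<noteq> 0"
  proof (intro exI conjI)
    show "n + j0 < m + n" using j0 by simp
    show "v (n + j0) \<noteq> 0" unfolding v_def using c0 j0 s1 by auto
  qed
  have vx: "\<bar>v t\<bar> \<le> \<epsilon>" if "t < n" for t
  proof -
    have "\<bar>v t\<bar> = dist_int (x t)" unfolding v_def using that by (simp add: dist_int_round)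
    also have "\<dots> \<le> \<epsilon>" using Hd that unfolding x_def \<epsilon>_def S_def M_def N_def by simp
    finally show ?thesis .
  qed
  have ipv: "ip (m+n) v v \<le> N * \<epsilon>^2 + M * (c^2 * S^2)"
  proof -
    have "ip (m+n) v v = (\<Sum>t<n. (v t)^2) + (\<Sum>j<m. (v (n+j))^2)"
      unfolding ip_def using sum_split_nm[of "\<lambda>t. v t * v t" n m] by (simp add: add.commute power2_eq_square)
    also have "(\<Sum>t<n. (v t)^2) \<le> (\<Sum>t<n. \<epsilon>^2)"
    proof (rule sum_mono)
      fix t assume "t \<in> {..<n}"
      then have "\<bar>v t\<bar> \<le> \<epsilon>" using vx by simp
      then have "\<bar>v t\<bar>^2 \<le> \<epsilon>^2" by (rule power_mono) simp
      then show "(v t)^2 \<le> \<epsilon>^2" by simp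
    qed
    also have "(\<Sum>j<m. (v (n+j))^2) \<le> (\<Sum>j<m. c^2 * S^2)"
    proof (rule sum_mono)
      fix j assume j: "j \<in> {..<m}"
      have "\<bar>real_of_int (sv j)\<bar> \<le> S" using svle[of j] j unfolding S_def by simp
      then have "\<bar>real_of_int (sv j)\<bar>^2 \<le> S^2" by (rule power_mono) simp
      then have "(real_of_int (sv j))^2 \<le> S^2" by simp
      then have "c^2 * (real_of_int (sv j))^2 \<le> c^2 * S^2" by (rule mult_left_mono) simp
      then show "(v (n+j))^2 \<le> c^2 * S^2" unfolding v_def by (simp add: power_mult_distrib)
    qed
    finally show ?thesis by (simp add: N_def M_def)
  qed
  have small: "M * (c^2 * S^2) \<le> N * \<epsilon>^2"
  proof -
    have l1: "log 2 (M * (c^2 * S^2)) = LMM + 2 * e + 2 * LSS"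
      unfolding LMM_def LSS_def using M0 c0 S1 by (simp add: log_mult log_nat_power ce)
    have l2: "log 2 (N * \<epsilon>^2) = LNN + 2 * (LDD - z)"
    proof -
      have "log 2 \<epsilon> = LDD - z" unfolding \<epsilon>_def LDD_def z_def LSS_def using d0 S1 by (simp add: log_mult log_powr)
      then show ?thesis unfolding LNN_def using N0 eps0 by (simp add: log_mult log_nat_power)
    qed
    have "2 * e \<le> 2 * \<gamma>" using eB by simp
    moreover have "2 * \<gamma> = LNN - LMM + 2 * LDD - 2 * LSS - 2 * z" unfolding \<gamma>_def G_def by (simp add: field_simps)
    ultimately have "LMM + 2 * e + 2 * LSS \<le> LNN + 2 * (LDD - z)" by (simp add: algebra_simps)
    then have "log 2 (M * (c^2 * S^2)) \<le> log 2 (N * \<epsilon>^2)" using l1 l2 by simp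
    then show ?thesis using M0 c0 S1 N0 eps0 by simp
  qed
  define b0 where "b0 = R k 0"
  have b0v: "ip (m+n) b0 b0 \<le> 2^(m+n-1) * ip (m+n) v v"
    unfolding b0_def by (rule first_short[OF Rk vL vnz])
  have b0d: "ip (m+n) b0 b0 \<le> 2^(m+n) * N * \<epsilon>^2"
  proof -
    have "ip (m+n) v v \<le> 2 * N * \<epsilon>^2" using ipv small by simp
    then have "2^(m+n-1) * ip (m+n) v v \<le> 2^(m+n-1) * (2 * N * \<epsilon>^2)" by (rule mult_left_mono) simp
    also have "\<dots> = 2^(m+n) * N * \<epsilon>^2"
    proof -
      have "m + n = Suc (m + n - 1)" using m1 by simp
      then have "(2::real)^(m+n) = 2^(m+n-1) * 2" by (metis power_Suc2)
      then show ?thesis by simp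
    qed
    finally show ?thesis using b0v by simp
  qed
  have b0k: "ip (m+n) b0 b0 \<le> 2 powr (- 2 * real k)"
  proof -
    have "(ip (m+n) b0 b0)^(m+n) \<le> 2^(\<Sum>i<m+n. i) * (det (Bm (m+n) (R k)))^2"
      unfolding b0_def by (rule first_det[OF Rk])
    also have "\<dots> = 2 powr (rr * (rr - 1) / 2) * 2 powr (e * real (2 * m))"
    proof -
      have "(2::real)^(\<Sum>i<m+n. i) = 2 powr (real (\<Sum>i<m+n. i))" by (rule powr_realpow[symmetric]) simp
      also have "real (\<Sum>i<m+n. i) = rr * (rr - 1) / 2" using gauss2[of "m+n"] unfolding rr_def by simp
      finally have a: "(2::real)^(\<Sum>i<m+n. i) = 2 powr (rr * (rr - 1) / 2)" .
      have "(det (Bm (m+n) (R k)))^2 = c^(2*m)" using RF by (simp add: power_mult[symmetric] mult.commute)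
      also have "\<dots> = (2 powr e) powr (real (2*m))" unfolding ce by (rule powr_realpow[symmetric]) simp
      also have "\<dots> = 2 powr (e * real (2*m))" by (rule powr_powr)
      finally show ?thesis using a by simp
    qed
    also have "\<dots> = 2 powr (- 2 * real k * rr)" unfolding powr_add[symmetric]
    proof -
      have "rr * (rr - 1) / 2 + e * real (2 * m) = - 2 * real k * rr"
      proof -
        have "real (2 * m) = 2 * M" by (simp add: M_def)
        then show ?thesis unfolding e_def using M0 by (simp add: field_simps)
      qed
      then show "2 powr (rr * (rr - 1) / 2 + e * real (2 * m)) = 2 powr (- 2 * real k * rr)" by simp
    qed
    also have "\<dots> = (2 powr (- 2 * real k))^(m+n)"
    proof -
      have "(2 powr (- 2 * real k))^(m+n) = (2 powr (- 2 * real k)) powr (real (m+n))" by (rule powr_realpow[symmetric]) simp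
      also have "\<dots> = 2 powr (- 2 * real k * rr)" by (simp add: powr_powr rr_def)
      finally show ?thesis by simp
    qed
    finally have pw: "(ip (m+n) b0 b0)^(m+n) \<le> (2 powr (- 2 * real k))^(m+n)" .
    have "Suc (m+n-1) = m+n" using m1 by simp
    then have "(ip (m+n) b0 b0)^(Suc (m+n-1)) \<le> (2 powr (- 2 * real k))^(Suc (m+n-1))" using pw by simp
    then show ?thesis by (rule power_le_imp_le_base) simp
  qed
  have "b0 \<in> lattice_of (m+n) (R k)" unfolding b0_def by (rule lattice_basis_vec) (use m1 in simp)
  then have "b0 \<in> Sset m n A c" using RF by simp
  then obtain q p where qp: "\<forall>t<m+n. b0 t = (if t < n then (\<Sum>j<m. real_of_int (q j) * A t j) - real_of_int (p t) else c * real_of_int (q (t - n)))"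
    unfolding Sset_def by blast
  have out: "ILLL_output m n A R k q"
    unfolding ILLL_output_def
  proof (rule exI[of _ p], intro conjI allI impI)
    fix i assume "i < n"
    then show "R k 0 i = (\<Sum>j<m. real_of_int (q j) * A i j) - real_of_int (p i)" using qp unfolding b0_def by auto
  next
    fix j assume "j < m"
    then show "R k 0 (n + j) = ILLL_c m n k * real_of_int (q j)" using qp[rule_format, of "n+j"] unfolding b0_def c_def by simp
  qed
  have qb: "real_of_int \<bar>q j\<bar> \<le> Q" if j: "j < m" for j
  proof -
    have "(b0 (n+j))^2 \<le> ip (m+n) b0 b0" by (rule coord_le_ip) (use j in simp)
    also have "\<dots> \<le> 2 powr (- 2 * real k)" by (rule b0k)
    also have "\<dots> = (2 powr (- real k))^2" by (simp add: powr_realpow[symmetric] powr_powr mult.commute)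
    finally have "(c * real_of_int (q j))^2 \<le> (2 powr (- real k))^2" using qp[rule_format, of "n+j"] j by simp
    then have "\<bar>c * real_of_int (q j)\<bar> \<le> \<bar>2 powr (- real k)\<bar>" by (simp only: abs_le_square_iff)
    then have "c * real_of_int \<bar>q j\<bar> \<le> 2 powr (- real k)" using c0 by (simp add: abs_mult)
    then have "real_of_int \<bar>q j\<bar> \<le> 2 powr (- real k) / c" using c0 by (simp add: field_simps)
    also have "\<dots> = 2 powr (- real k - e)" unfolding ce by (simp add: powr_diff)
    also have "\<dots> \<le> 2 powr (log 2 Q)" using eA by simp
    also have "\<dots> = Q" using Q0 by simp
    finally show ?thesis .
  qed
  define T where "T = 2 powr ((real m + real n) / 2) * sqrt (real n) * \<delta> * real_of_int s powr (- real m / real n)"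
  have T0: "T \<ge> 0" unfolding T_def using d0 by simp
  have T2: "T^2 = 2^(m+n) * N * \<epsilon>^2"
  proof -
    have "(2 powr ((real m + real n) / 2))^2 = (2::real)^(m+n)"
    proof -
      have ee: "(real m + real n) / 2 * real 2 = real (m+n)" by simp
      have "(2 powr ((real m + real n) / 2))^2 = (2 powr ((real m + real n) / 2)) powr (real 2)" by (rule powr_realpow[symmetric]) simp
      also have "\<dots> = 2 powr ((real m + real n) / 2 * real 2)" by (rule powr_powr)
      also have "\<dots> = 2 powr (real (m+n))" by (simp only: ee)
      also have "\<dots> = 2^(m+n)" by (rule powr_realpow) simp
      finally show ?thesis .
    qed
    then show ?thesis unfolding T_def \<epsilon>_def N_def S_def M_def by (simp add: power_mult_distrib)
  qed
  have db: "dist_int (\<Sum>j<m. real_of_int (q j) * A i j) \<le> T" if i: "i < n" for i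
  proof -
    have "dist_int (\<Sum>j<m. real_of_int (q j) * A i j) \<le> \<bar>(\<Sum>j<m. real_of_int (q j) * A i j) - real_of_int (p i)\<bar>"
      by (rule dist_int_le)
    also have "\<dots> = \<bar>b0 i\<bar>" using qp i by simp
    also have "\<dots> \<le> T"
    proof -
      have "(b0 i)^2 \<le> ip (m+n) b0 b0" by (rule coord_le_ip) (use i in simp)
      also have "\<dots> \<le> T^2" using b0d T2 by simp
      finally have "\<bar>b0 i\<bar> \<le> \<bar>T\<bar>" by (simp only: abs_le_square_iff)
      then show ?thesis using T0 by simp
    qed
    finally show ?thesis .
  qed
  show ?thesis
  proof (rule exI[of _ k], intro conjI exI[of _ q])
    show "1 \<le> k" using kb by simp
    show "int k \<le> ILLL_kmax m n qmax" by (rule kmax)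
    show "ILLL_output m n A R k q" by (rule out)
    show "\<forall>j<m. real_of_int \<bar>q j\<bar> \<le>
                 2 powr ((real m ^ 2 + real m * (real n - 1) + 4 * real n) / (4 * real m))
                 * (real m / (real n * \<delta>^2)) powr (real n / (2 * (real m + real n))) * real_of_int s"
      using qb unfolding Q_def by blast
    show "\<forall>i<n. dist_int (\<Sum>j<m. real_of_int (q j) * A i j)
                 \<le> 2 powr ((real m + real n) / 2) * sqrt (real n) * \<delta> * real_of_int s powr (- real m / real n)"
      using db unfolding T_def by blast
  qed
qed

end
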